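(* Let $\Gamma$ be a reduced plumbing tree with invertible framing matrix $B$ and $\tau=(Q,a,\xi)$ with $a\in\delta+2Q^{V(\Gamma)}$ and $\xi$ a Weyl assignment. In the formal sum defining $\mathsf{Y}_\tau(q,t)$, the exponents $\xi^{-1}(\ell)$ of $t$ occurring with $c_{\Gamma,\xi}(\ell)\neq0$ are bounded above (they lie in a finite union of sets $\beta-Q_{\ge0}$, where $Q_{\ge0}$ is the set of nonnegative integer combinations of positive roots), and for each $\beta\in Q$ only finitely many $\ell\in a+2BQ^{V(\Gamma)}$ with $c_{\Gamma,\xi}(\ell)\ne0$ have $\xi^{-1}(\ell)=\beta$. Consequently $\mathsf{Y}_\tau(q,t)$ is well defined and $$\mathsf{Y}_\tau(q,t)\in q^{\frac12(3\sigma(B)-\mathrm{tr}B)\langle\rho,\rho\rangle-\frac18\langle a,a\rangle}\,\mathbb{Z}[q^{\pm1/2}]((t_1^{-1},\dots,t_r^{-1})).$$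
   Context: Root data: $Q$ a root lattice of rank $r$, $\Delta^+$ positive roots, $\rho=\frac12\sum_{\alpha\in\Delta^+}\alpha$, $W$ the Weyl group, $\ell(w)$ the length. $z^\beta$ (resp. $t^\beta$) for $\beta\in Q$ is the Laurent monomial $\prod_i z_i^{\langle\beta^\vee,\lambda_i\rangle}$ ($\lambda_i$ fundamental weights), additive in $\beta$. $k(\alpha)$ is the Kostant partition function. For $x\in W$: $K_x(z)=(-1)^{\ell(x)}\sum_{\alpha\in Q}k(\alpha)z^{-x(2\rho+2\alpha)}$; $D(z)=\sum_{w\in W}(-1)^{\ell(w)}z^{2w(\rho)}$; $K_{x,0}=D^2,K_{x,1}=D,K_{x,2}=1,K_{x,n}=K_x^{n-2}$ ($n\ge3$). $[f]_\beta$ is the coefficient of $z^\beta$. Plumbing: $\Gamma$ a finite tree with integer weights $m_v$; framing matrix $B$ ($B_{vv}=m_v$, $B_{uv}=1$ if adjacent, else 0), $\det B\ne0$; $\pi(B)$ = number of positive eigenvalues, $\sigma(B)$ = signature. $(Bu)_v=\sum_{v'}B_{vv'}u_{v'}$ for $u\in Q^{V(\Gamma)}$. Pairing $\langle a,b\rangle=\sum_{u,v}(B^{-1})_{uv}\langle a_u,b_v\rangle$. $\delta_v=(2-\deg v)2\rho$. Neumann moves: (A$\pm$) delete a degree-2 vertex of weight $\pm1$ whose neighbors have weights $m_1\pm1,m_2\pm1$, join the neighbors, new weights $m_1,m_2$; (B$\pm$) delete a leaf of weight $\pm1$ whose neighbor has weight $m_1\pm1$, neighbor gets weight $m_1$;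 (C) delete a degree-2 vertex of weight 0 and merge its neighbors (weights $m_1,m_2$) into one vertex of weight $m_1+m_2$; plus inverses. Contractible subtree: turned into one vertex by Neumann moves. Reducible vertex: degree $\ge3$ dropping to 1 or 2 after contracting all incident contractible subtrees. Reduced: no reducible vertices. Weyl assignment: $\xi:V(\Gamma)\to W$ with $\xi_v=1_W$ if $\deg v=2$ and, for each maximal contractible degree-2 path (path with all non-terminal vertices of degree 2, contractible, maximal among such) with terminal vertices $v,v'$ not both of degree 2, $\xi_v=\iota^{\pi(B)-\pi(\overline B)}\xi_{v'}$ where $\iota\in W$ acts by $-1$ and $\overline B$ is the framing matrix after contracting the path. Series: $c_{\Gamma,\xi}(\ell)=\prod_v[K_{\xi_v,\deg v}(z_v)]_{\ell_v}$, $\xi^{-1}(\ell)=\sum_v\xi_v^{-1}(\ell_v)$, $\mathsf{Y}_\tau(q,t)=(-1)^{|\Delta^+|\pi(B)}q^{\frac12(3\sigma(B)-\mathrm{tr}B)\langle\rho,\rho\rangle}\sum_{\ell\in a+2BQ^{V(\Gamma)}}c_{\Gamma,\xi}(\ell)t^{\xi^{-1}(\ell)}q^{-\frac18\langle\ell,\ell\rangle}$. *)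

theory Defs
  imports "HOL-Analysis.Analysis" "HOL-Library.Function_Algebras"
          "HOL-Combinatorics.Permutations" "HOL-Computational_Algebra.Polynomial"
begin

text \<open>The root lattice Q of rank r = CARD('i) is modelled as 'i => int
  (coordinates w.r.t. the simple roots).  A i j = <alpha_i^vee, alpha_j>.
  The invariant form is (beta,gamma) = sum_ij beta_i d_i A_ij gamma_j with
  (alpha_i,alpha_i) = 2 d_i.\<close>

definition cartan_finite :: "('i::finite \<Rightarrow> 'i \<Rightarrow> int) \<Rightarrow> ('i \<Rightarrow> int) \<Rightarrow> bool" where
  "cartan_finite A d \<longleftrightarrow>
     (\<forall>i. A i i = 2) \<and> (\<forall>i j. i \<noteq> j \<longrightarrow> A i j \<le> 0) \<and> (\<forall>i. 0 < d i) \<and>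
     (\<forall>i j. d i * A i j = d j * A j i) \<and>
     (\<forall>\<beta>::'i \<Rightarrow> int. \<beta> \<noteq> 0 \<longrightarrow> 0 < (\<Sum>i\<in>UNIV. \<Sum>j\<in>UNIV. \<beta> i * d i * A i j * \<beta> j))"

definition rform :: "('i::finite \<Rightarrow> 'i \<Rightarrow> int) \<Rightarrow> ('i \<Rightarrow> int) \<Rightarrow> ('i \<Rightarrow> int) \<Rightarrow> ('i \<Rightarrow> int) \<Rightarrow> int" where
  "rform A d \<beta> \<gamma> = (\<Sum>i\<in>UNIV. \<Sum>j\<in>UNIV. \<beta> i * d i * A i j * \<gamma> j)"

definition srefl :: "('i::finite \<Rightarrow> 'i \<Rightarrow> int) \<Rightarrow> 'i \<Rightarrow> ('i \<Rightarrow> int) \<Rightarrow> ('i \<Rightarrow> int)" where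
  "srefl A i \<beta> = (\<lambda>k. \<beta> k - (if k = i then (\<Sum>j\<in>UNIV. A i j * \<beta> j) else 0))"

definition wword :: "('i::finite \<Rightarrow> 'i \<Rightarrow> int) \<Rightarrow> 'i list \<Rightarrow> (('i \<Rightarrow> int) \<Rightarrow> ('i \<Rightarrow> int))" where
  "wword A is = foldr (\<lambda>i f. srefl A i \<circ> f) is id"

definition weyl :: "('i::finite \<Rightarrow> 'i \<Rightarrow> int) \<Rightarrow> (('i \<Rightarrow> int) \<Rightarrow> ('i \<Rightarrow> int)) set" where
  "weyl A = range (wword A)"

definition wlen :: "('i::finite \<Rightarrow> 'i \<Rightarrow> int) \<Rightarrow> (('i \<Rightarrow> int) \<Rightarrow> ('i \<Rightarrow> int)) \<Rightarrow> nat" where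
  "wlen A w = (LEAST n. \<exists>is. length is = n \<and> wword A is = w)"

definition wsgn :: "('i::finite \<Rightarrow> 'i \<Rightarrow> int) \<Rightarrow> (('i \<Rightarrow> int) \<Rightarrow> ('i \<Rightarrow> int)) \<Rightarrow> int" where
  "wsgn A w = (-1) ^ wlen A w"

definition sroot :: "'i \<Rightarrow> ('i \<Rightarrow> int)" where
  "sroot i = (\<lambda>k. if k = i then 1 else 0)"

definition roots :: "('i::finite \<Rightarrow> 'i \<Rightarrow> int) \<Rightarrow> ('i \<Rightarrow> int) set" where
  "roots A = {w (sroot i) | w i. w \<in> weyl A}"

definition posroots :: "('i::finite \<Rightarrow> 'i \<Rightarrow> int) \<Rightarrow> ('i \<Rightarrow> int) set" where
  "posroots A = {\<alpha> \<in> roots A. \<forall>k. 0 \<le> \<alpha> k}"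

text \<open>2 rho (rho itself lies in the weight lattice; only 2 rho is needed).\<close>
definition two_rho :: "('i::finite \<Rightarrow> 'i \<Rightarrow> int) \<Rightarrow> ('i \<Rightarrow> int)" where
  "two_rho A = (\<Sum>\<alpha>\<in>posroots A. \<alpha>)"

definition rho_sq :: "('i::finite \<Rightarrow> 'i \<Rightarrow> int) \<Rightarrow> ('i \<Rightarrow> int) \<Rightarrow> rat" where
  "rho_sq A d = of_int (rform A d (two_rho A) (two_rho A)) / 4"

definition Qpos :: "('i::finite \<Rightarrow> 'i \<Rightarrow> int) \<Rightarrow> ('i \<Rightarrow> int) set" where
  "Qpos A = {\<gamma>. \<exists>n::('i \<Rightarrow> int) \<Rightarrow> nat. \<gamma> = (\<lambda>k. \<Sum>\<alpha>\<in>posroots A. int (n \<alpha>) * \<alpha> k)}"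

definition kostant :: "('i::finite \<Rightarrow> 'i \<Rightarrow> int) \<Rightarrow> ('i \<Rightarrow> int) \<Rightarrow> nat" where
  "kostant A \<alpha> = card {n::('i \<Rightarrow> int) \<Rightarrow> nat. (\<forall>\<gamma>. \<gamma> \<notin> posroots A \<longrightarrow> n \<gamma> = 0) \<and>
                        (\<lambda>k. \<Sum>\<gamma>\<in>posroots A. int (n \<gamma>) * \<gamma> k) = \<alpha>}"

section \<open>Formal Laurent series in z: coefficient functions Q => int
  (the value at beta is the coefficient of z^beta)\<close>

definition ser_one :: "('i \<Rightarrow> int) \<Rightarrow> int" where
  "ser_one \<gamma> = (if \<gamma> = 0 then 1 else 0)"

definition ser_mult :: "(('i \<Rightarrow> int) \<Rightarrow> int) \<Rightarrow> (('i \<Rightarrow> int) \<Rightarrow> int) \<Rightarrow> ('i \<Rightarrow> int) \<Rightarrow> int" where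
  "ser_mult f g \<gamma> = (\<Sum>(b, c) \<in> {(b, c). b + c = \<gamma> \<and> f b \<noteq> 0 \<and> g c \<noteq> 0}. f b * g c)"

primrec ser_pow :: "(('i \<Rightarrow> int) \<Rightarrow> int) \<Rightarrow> nat \<Rightarrow> ('i \<Rightarrow> int) \<Rightarrow> int" where
  "ser_pow f 0 = ser_one"
| "ser_pow f (Suc n) = ser_mult f (ser_pow f n)"

definition Dser :: "('i::finite \<Rightarrow> 'i \<Rightarrow> int) \<Rightarrow> ('i \<Rightarrow> int) \<Rightarrow> int" where
  "Dser A \<gamma> = (\<Sum>w\<in>{w \<in> weyl A. w (two_rho A) = \<gamma>}. wsgn A w)"

definition Kser :: "('i::finite \<Rightarrow> 'i \<Rightarrow> int) \<Rightarrow> (('i \<Rightarrow> int) \<Rightarrow> ('i \<Rightarrow> int)) \<Rightarrow> ('i \<Rightarrow> int) \<Rightarrow> int" where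
  "Kser A x \<gamma> = wsgn A x *
     (\<Sum>\<alpha>\<in>{\<alpha>. - x (\<lambda>k. two_rho A k + 2 * \<alpha> k) = \<gamma>}. int (kostant A \<alpha>))"

definition Kn :: "('i::finite \<Rightarrow> 'i \<Rightarrow> int) \<Rightarrow> (('i \<Rightarrow> int) \<Rightarrow> ('i \<Rightarrow> int)) \<Rightarrow> nat \<Rightarrow> ('i \<Rightarrow> int) \<Rightarrow> int" where
  "Kn A x n = (if n = 0 then ser_mult (Dser A) (Dser A)
               else if n = 1 then Dser A
               else if n = 2 then ser_one
               else ser_pow (Kser A x) (n - 2))"

type_synonym pgraph = "nat set \<times> (nat \<Rightarrow> nat \<Rightarrow> bool) \<times> (nat \<Rightarrow> int)"

definition pV :: "pgraph \<Rightarrow> nat set" where "pV G = fst G"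
definition pE :: "pgraph \<Rightarrow> nat \<Rightarrow> nat \<Rightarrow> bool" where "pE G = fst (snd G)"
definition pm :: "pgraph \<Rightarrow> nat \<Rightarrow> int" where "pm G = snd (snd G)"

definition wf_pg :: "pgraph \<Rightarrow> bool" where
  "wf_pg G \<longleftrightarrow> finite (pV G) \<and>
     (\<forall>x y. pE G x y \<longrightarrow> x \<in> pV G \<and> y \<in> pV G \<and> x \<noteq> y \<and> pE G y x)"

definition pdeg :: "pgraph \<Rightarrow> nat \<Rightarrow> nat" where
  "pdeg G v = card {u \<in> pV G. pE G v u}"

definition is_tree :: "pgraph \<Rightarrow> bool" where
  "is_tree G \<longleftrightarrow> wf_pg G \<and> pV G \<noteq> {} \<and>
     (\<forall>u\<in>pV G. \<forall>w\<in>pV G. (pE G)\<^sup>*\<^sup>* u w) \<and>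
     card {{x, y} | x y. pE G x y} + 1 = card (pV G)"

definition framing :: "pgraph \<Rightarrow> nat \<Rightarrow> nat \<Rightarrow> int" where
  "framing G u w = (if u = w then pm G u else if pE G u w then 1 else 0)"

definition det_on :: "nat set \<Rightarrow> (nat \<Rightarrow> nat \<Rightarrow> int) \<Rightarrow> int" where
  "det_on V M = (\<Sum>p\<in>{p. p permutes V}. sign p * (\<Prod>v\<in>V. M v (p v)))"

definition charpoly_on :: "nat set \<Rightarrow> (nat \<Rightarrow> nat \<Rightarrow> int) \<Rightarrow> real poly" where
  "charpoly_on V M = (\<Sum>p\<in>{p. p permutes V}. of_int (sign p) *
      (\<Prod>v\<in>V. (if p v = v then [:- of_int (M v v), 1:] else [:- of_int (M v (p v)):])))"

definition npos :: "nat set \<Rightarrow> (nat \<Rightarrow> nat \<Rightarrow> int) \<Rightarrow> nat" where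
  "npos V M = (\<Sum>x\<in>{x::real. 0 < x \<and> poly (charpoly_on V M) x = 0}. order x (charpoly_on V M))"

definition nneg :: "nat set \<Rightarrow> (nat \<Rightarrow> nat \<Rightarrow> int) \<Rightarrow> nat" where
  "nneg V M = (\<Sum>x\<in>{x::real. x < 0 \<and> poly (charpoly_on V M) x = 0}. order x (charpoly_on V M))"

definition pi_B :: "pgraph \<Rightarrow> nat" where
  "pi_B G = npos (pV G) (framing G)"

definition sigma_B :: "pgraph \<Rightarrow> int" where
  "sigma_B G = int (npos (pV G) (framing G)) - int (nneg (pV G) (framing G))"

definition trace_B :: "pgraph \<Rightarrow> int" where
  "trace_B G = (\<Sum>v\<in>pV G. pm G v)"

definition Binv :: "pgraph \<Rightarrow> nat \<Rightarrow> nat \<Rightarrow> rat" where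
  "Binv G = (THE M. (\<forall>u\<in>pV G. \<forall>v\<in>pV G.
        (\<Sum>w\<in>pV G. of_int (framing G u w) * M w v) = (if u = v then 1 else 0)) \<and>
      (\<forall>u v. u \<notin> pV G \<or> v \<notin> pV G \<longrightarrow> M u v = 0))"

definition nmove :: "pgraph \<Rightarrow> pgraph \<Rightarrow> bool" where
  "nmove G G' \<longleftrightarrow> wf_pg G \<and>
   ((\<exists>v u1 u2 \<epsilon>. \<epsilon> \<in> {1, -1} \<and> v \<in> pV G \<and> u1 \<noteq> u2 \<and> {u \<in> pV G. pE G v u} = {u1, u2} \<and>
        pm G v = \<epsilon> \<and>
        G' = (pV G - {v},
              (\<lambda>x y. x \<in> pV G - {v} \<and> y \<in> pV G - {v} \<and> (pE G x y \<or> {x, y} = {u1, u2})),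
              (pm G)(u1 := pm G u1 - \<epsilon>, u2 := pm G u2 - \<epsilon>)))
  \<or> (\<exists>v u \<epsilon>. \<epsilon> \<in> {1, -1} \<and> v \<in> pV G \<and> {u' \<in> pV G. pE G v u'} = {u} \<and> pm G v = \<epsilon> \<and>
        G' = (pV G - {v},
              (\<lambda>x y. x \<in> pV G - {v} \<and> y \<in> pV G - {v} \<and> pE G x y),
              (pm G)(u := pm G u - \<epsilon>)))
  \<or> (\<exists>v u1 u2. v \<in> pV G \<and> u1 \<noteq> u2 \<and> {u \<in> pV G. pE G v u} = {u1, u2} \<and> pm G v = 0 \<and>
        G' = (pV G - {v, u2},
              (\<lambda>x y. x \<in> pV G - {v, u2} \<and> y \<in> pV G - {v, u2} \<and> x \<noteq> y \<and>
                     (pE G x y \<or> (x = u1 \<and> pE G u2 y) \<or> (y = u1 \<and> pE G x u2))),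
              (pm G)(u1 := pm G u1 + pm G u2))))"

definition neq :: "pgraph \<Rightarrow> pgraph \<Rightarrow> bool" where
  "neq = (\<lambda>G G'. nmove G G' \<or> nmove G' G)\<^sup>*\<^sup>*"

definition contract_rel :: "pgraph \<Rightarrow> nat set \<Rightarrow> pgraph \<Rightarrow> bool" where
  "contract_rel G T G' \<longleftrightarrow> neq G G' \<and>
     (\<exists>w\<in>T. pV G' = (pV G - T) \<union> {w} \<and>
        pE G' = (\<lambda>x y. x \<in> pV G' \<and> y \<in> pV G' \<and> x \<noteq> y \<and>
                  (\<exists>a b. pE G a b \<and> (if a \<in> T then w else a) = x \<and> (if b \<in> T then w else b) = y)) \<and>
        (\<forall>u\<in>pV G - T. pm G' u = pm G u))"

definition connected_in :: "pgraph \<Rightarrow> nat set \<Rightarrow> bool" where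
  "connected_in G T \<longleftrightarrow> (\<forall>x\<in>T. \<forall>y\<in>T. (\<lambda>a b. pE G a b \<and> a \<in> T \<and> b \<in> T)\<^sup>*\<^sup>* x y)"

definition contractible :: "pgraph \<Rightarrow> nat set \<Rightarrow> bool" where
  "contractible G T \<longleftrightarrow> T \<subseteq> pV G \<and> T \<noteq> {} \<and> connected_in G T \<and> (\<exists>G'. contract_rel G T G')"

definition reducible :: "pgraph \<Rightarrow> nat \<Rightarrow> bool" where
  "reducible G v \<longleftrightarrow> v \<in> pV G \<and> 3 \<le> pdeg G v \<and>
     (let U = \<Union>{T. contractible G T \<and> v \<in> T}
      in card {(x, y). x \<in> U \<and> y \<in> pV G - U \<and> pE G x y} \<in> {1, 2})"

definition reduced :: "pgraph \<Rightarrow> bool" where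
  "reduced G \<longleftrightarrow> (\<forall>v\<in>pV G. \<not> reducible G v)"

definition is_dpath :: "pgraph \<Rightarrow> nat list \<Rightarrow> bool" where
  "is_dpath G P \<longleftrightarrow> 2 \<le> length P \<and> distinct P \<and> set P \<subseteq> pV G \<and>
     (\<forall>i. i + 1 < length P \<longrightarrow> pE G (P ! i) (P ! (i + 1))) \<and>
     (\<forall>i. 0 < i \<and> i + 1 < length P \<longrightarrow> pdeg G (P ! i) = 2)"

definition max_cdpath :: "pgraph \<Rightarrow> nat list \<Rightarrow> bool" where
  "max_cdpath G P \<longleftrightarrow> is_dpath G P \<and> contractible G (set P) \<and>
     \<not> (\<exists>P'. is_dpath G P' \<and> contractible G (set P') \<and> set P \<subset> set P')"

text \<open>iota^k, where iota acts by -1.\<close>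
definition iota_pow :: "int \<Rightarrow> ('i \<Rightarrow> int) \<Rightarrow> ('i \<Rightarrow> int)" where
  "iota_pow k = (if even k then id else (\<lambda>\<beta>. - \<beta>))"

definition weyl_assignment ::
  "('i::finite \<Rightarrow> 'i \<Rightarrow> int) \<Rightarrow> pgraph \<Rightarrow> (nat \<Rightarrow> (('i \<Rightarrow> int) \<Rightarrow> ('i \<Rightarrow> int))) \<Rightarrow> bool" where
  "weyl_assignment A G \<xi> \<longleftrightarrow>
     (\<forall>v\<in>pV G. \<xi> v \<in> weyl A) \<and>
     (\<forall>v\<in>pV G. pdeg G v = 2 \<longrightarrow> \<xi> v = id) \<and>
     (\<forall>P. max_cdpath G P \<longrightarrow> \<not> (pdeg G (hd P) = 2 \<and> pdeg G (last P) = 2) \<longrightarrow>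
        (\<forall>G'. contract_rel G (set P) G' \<longrightarrow>
           \<xi> (hd P) = iota_pow (int (pi_B G) - int (pi_B G')) \<circ> \<xi> (last P)))"

definition delta_vec :: "('i::finite \<Rightarrow> 'i \<Rightarrow> int) \<Rightarrow> pgraph \<Rightarrow> nat \<Rightarrow> ('i \<Rightarrow> int)" where
  "delta_vec A G v = (\<lambda>k. (2 - int (pdeg G v)) * two_rho A k)"

text \<open>The coset a + 2 B Q^{V(Gamma)} (vectors are zero off V).\<close>
definition lcoset :: "pgraph \<Rightarrow> (nat \<Rightarrow> ('i \<Rightarrow> int)) \<Rightarrow> (nat \<Rightarrow> ('i \<Rightarrow> int)) set" where
  "lcoset G a = {l. (\<exists>x::nat \<Rightarrow> ('i \<Rightarrow> int). \<forall>v\<in>pV G.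
        l v = (\<lambda>k. a v k + 2 * (\<Sum>v'\<in>pV G. framing G v v' * x v' k))) \<and>
      (\<forall>v. v \<notin> pV G \<longrightarrow> l v = 0)}"

definition lpair :: "('i::finite \<Rightarrow> 'i \<Rightarrow> int) \<Rightarrow> ('i \<Rightarrow> int) \<Rightarrow> pgraph \<Rightarrow>
    (nat \<Rightarrow> ('i \<Rightarrow> int)) \<Rightarrow> (nat \<Rightarrow> ('i \<Rightarrow> int)) \<Rightarrow> rat" where
  "lpair A d G a b = (\<Sum>u\<in>pV G. \<Sum>v\<in>pV G. Binv G u v * of_int (rform A d (a u) (b v)))"

definition cGx :: "('i::finite \<Rightarrow> 'i \<Rightarrow> int) \<Rightarrow> pgraph \<Rightarrow> (nat \<Rightarrow> (('i \<Rightarrow> int) \<Rightarrow> ('i \<Rightarrow> int))) \<Rightarrow>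
    (nat \<Rightarrow> ('i \<Rightarrow> int)) \<Rightarrow> int" where
  "cGx A G \<xi> l = (\<Prod>v\<in>pV G. Kn A (\<xi> v) (pdeg G v) (l v))"

definition xiinv :: "pgraph \<Rightarrow> (nat \<Rightarrow> (('i \<Rightarrow> int) \<Rightarrow> ('i \<Rightarrow> int))) \<Rightarrow> (nat \<Rightarrow> ('i \<Rightarrow> int)) \<Rightarrow> ('i \<Rightarrow> int)" where
  "xiinv G \<xi> l = (\<Sum>v\<in>pV G. inv (\<xi> v) (l v))"

definition Yexp0 :: "('i::finite \<Rightarrow> 'i \<Rightarrow> int) \<Rightarrow> ('i \<Rightarrow> int) \<Rightarrow> pgraph \<Rightarrow> rat" where
  "Yexp0 A d G = of_int (3 * sigma_B G - trace_B G) / 2 * rho_sq A d"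

text \<open>Coefficient of t^beta q^e in Y_tau(q,t) (meaningful once the relevant sets are finite).\<close>
definition Ycoeff :: "('i::finite \<Rightarrow> 'i \<Rightarrow> int) \<Rightarrow> ('i \<Rightarrow> int) \<Rightarrow> pgraph \<Rightarrow> (nat \<Rightarrow> ('i \<Rightarrow> int)) \<Rightarrow>
    (nat \<Rightarrow> (('i \<Rightarrow> int) \<Rightarrow> ('i \<Rightarrow> int))) \<Rightarrow> ('i \<Rightarrow> int) \<Rightarrow> rat \<Rightarrow> int" where
  "Ycoeff A d G a \<xi> \<beta> e =
     (\<Sum>l\<in>{l \<in> lcoset G a. cGx A G \<xi> l \<noteq> 0 \<and> xiinv G \<xi> l = \<beta> \<and>
             Yexp0 A d G - lpair A d G l l / 8 = e}.
        (-1) ^ (card (posroots A) * pi_B G) * cGx A G \<xi> l)"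

text \<open>F lies in q^{c0} Z[q^{+-1/2}]((t_1^{-1},...,t_r^{-1})): the t-support lies in a finite
  union of cones beta0 - Q_{>=0}; each t-coefficient is a finite sum of powers q^e
  with e in c0 + (1/2) Z.\<close>
definition in_Yring :: "('i::finite \<Rightarrow> 'i \<Rightarrow> int) \<Rightarrow> rat \<Rightarrow> (('i \<Rightarrow> int) \<Rightarrow> rat \<Rightarrow> int) \<Rightarrow> bool" where
  "in_Yring A c0 F \<longleftrightarrow>
     (\<exists>S. finite S \<and> (\<forall>\<beta> e. F \<beta> e \<noteq> 0 \<longrightarrow> (\<exists>\<beta>0\<in>S. \<beta>0 - \<beta> \<in> Qpos A))) \<and>
     (\<forall>\<beta>. finite {e. F \<beta> e \<noteq> 0}) \<and>
     (\<forall>\<beta> e. F \<beta> e \<noteq> 0 \<longrightarrow> 2 * (e - c0) \<in> \<int>)"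

end

theory Submission
  imports Defs "Jordan_Normal_Form.Determinant"
begin


definition qf :: "('a\<Rightarrow>'a\<Rightarrow>rat) \<Rightarrow> 'a set \<Rightarrow> ('a\<Rightarrow>rat) \<Rightarrow> rat" where
  "qf M I x = (\<Sum>i\<in>I. \<Sum>j\<in>I. x i * M i j * x j)"

lemma qf_cong: "(\<And>i. i \<in> I \<Longrightarrow> x i = y i) \<Longrightarrow> qf M I x = qf M I y"
  unfolding qf_def by (intro sum.cong refl) auto

lemma qf_insert_decomp:
  assumes fin: "finite I" and nI: "n \<notin> I" and sym: "\<And>i j. M i j = M j i" and a: "M n n \<noteq> 0"
  shows "qf M (insert n I) x =
    qf (\<lambda>i j. M i j - M i n * M n j / M n n) I x
    + M n n * (x n + (\<Sum>j\<in>I. M n j * x j) / M n n)^2"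
proof -
  define s where "s = (\<Sum>j\<in>I. M n j * x j)"
  have s2: "(\<Sum>i\<in>I. x i * M i n) = s" unfolding s_def using sym by (simp add: mult.commute)
  have A: "qf M (insert n I) x = qf M I x + 2 * x n * s + M n n * (x n)^2"
  proof -
    have "qf M (insert n I) x = (\<Sum>j\<in>insert n I. x n * M n j * x j) + (\<Sum>i\<in>I. \<Sum>j\<in>insert n I. x i * M i j * x j)"
      unfolding qf_def using fin nI by simp
    also have "(\<Sum>j\<in>insert n I. x n * M n j * x j) = x n * M n n * x n + x n * s"
      using fin nI by (simp add: s_def sum_distrib_left mult.assoc)
    also have "(\<Sum>i\<in>I. \<Sum>j\<in>insert n I. x i * M i j * x j) = (\<Sum>i\<in>I. x i * M i n * x n) + qf M I x"
      unfolding qf_def using fin nI by (simp add: sum.distrib)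
    also have "(\<Sum>i\<in>I. x i * M i n * x n) = s * x n" unfolding s2[symmetric] by (simp add: sum_distrib_right)
    finally show ?thesis by (simp add: power2_eq_square algebra_simps)
  qed
  have B: "qf (\<lambda>i j. M i j - M i n * M n j / M n n) I x = qf M I x - s * s / M n n"
  proof -
    have "qf (\<lambda>i j. M i j - M i n * M n j / M n n) I x = qf M I x - (\<Sum>i\<in>I. \<Sum>j\<in>I. (x i * M i n) * (M n j * x j) / M n n)"
      unfolding qf_def by (simp add: algebra_simps sum_subtractf)
    also have "(\<Sum>i\<in>I. \<Sum>j\<in>I. (x i * M i n) * (M n j * x j) / M n n) = (\<Sum>i\<in>I. x i * M i n * s / M n n)"
      unfolding s_def by (intro sum.cong refl) (simp add: sum_divide_distrib sum_distrib_left)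
    also have "\<dots> = (\<Sum>i\<in>I. x i * M i n) * s / M n n"
      by (simp add: sum_divide_distrib sum_distrib_right)
    finally show ?thesis using s2 by simp
  qed
  show ?thesis unfolding A B s_def[symmetric] using a
    by (simp add: power2_eq_square field_simps)
qed

lemma qf_finite:
  assumes "finite I"
  shows "(\<And>i j. M i j = M j i) \<Longrightarrow> (\<And>x. (\<exists>i\<in>I. x i \<noteq> 0) \<Longrightarrow> 0 < qf M I x) \<Longrightarrow>
    finite {x::'a\<Rightarrow>int. (\<forall>i. i \<notin> I \<longrightarrow> x i = 0) \<and> qf M I (\<lambda>i. of_int (x i)) \<le> c}"
  using assms
proof (induction I arbitrary: M c rule: finite_induct)
  case empty
  have "{x::'a\<Rightarrow>int. (\<forall>i. i \<notin> {} \<longrightarrow> x i = 0) \<and> qf M {} (\<lambda>i. of_int (x i)) \<le> c} \<subseteq> {0}"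
    by auto
  then show ?case using finite_subset by blast
next
  case (insert n I)
  define a where "a = M n n"
  have apos: "0 < a"
  proof -
    define e :: "'a \<Rightarrow> rat" where "e = (\<lambda>i. if i = n then 1 else 0)"
    have e0: "\<forall>i\<in>I. e i = 0" using insert.hyps by (auto simp: e_def)
    have en: "e n = 1" by (simp add: e_def)
    have "0 < qf M (insert n I) e" by (rule insert.prems(2)) (auto simp: e_def)
    also have "qf M (insert n I) e = a"
    proof -
      have z2: "(\<Sum>j\<in>I. e n * M n j * e j) = 0"
        using e0 by (intro sum.neutral ballI) simp
      show ?thesis unfolding qf_def sum.insert[OF insert.hyps(1,2)] z2 using en
        apply (simp add: a_def) apply (rule sum.neutral) apply (rule ballI) using e0 apply simp done
    qed
    finally show ?thesis .
  qed
  define M' where "M' = (\<lambda>i j. M i j - M i n * M n j / M n n)"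
  define s where "s = (\<lambda>x::'a\<Rightarrow>rat. \<Sum>j\<in>I. M n j * x j)"
  have dec: "\<And>x. qf M (insert n I) x = qf M' I x + a * (x n + s x / a)^2"
    unfolding M'_def s_def a_def
    by (rule qf_insert_decomp[OF insert.hyps(1,2) insert.prems(1)]) (use apos a_def in auto)
  have M'sym: "\<And>i j. M' i j = M' j i" unfolding M'_def using insert.prems(1) by (simp add: mult.commute)
  have M'pos: "0 < qf M' I x" if "\<exists>i\<in>I. x i \<noteq> 0" for x
  proof -
    define y where "y = x(n := - s x / a)"
    have sy: "s y = s x" unfolding s_def y_def using insert.hyps by (intro sum.cong) auto
    have "0 < qf M (insert n I) y" using that insert.hyps by (intro insert.prems(2)) (auto simp: y_def)
    also have "\<dots> = qf M' I y" unfolding dec sy by (simp add: y_def)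
    also have "\<dots> = qf M' I x" using insert.hyps by (intro qf_cong) (auto simp: y_def)
    finally show ?thesis .
  qed
  define F where "F = {x::'a\<Rightarrow>int. (\<forall>i. i \<notin> I \<longrightarrow> x i = 0) \<and> qf M' I (\<lambda>i. of_int (x i)) \<le> c}"
  have finF: "finite F" unfolding F_def by (rule insert.IH[OF M'sym M'pos]) auto
  define K where "K = (\<lambda>x'::'a\<Rightarrow>int. \<lceil>\<bar>s (\<lambda>i. of_int (x' i)) / a\<bar> + max 1 (c / a)\<rceil>)"
  have sub: "{x::'a\<Rightarrow>int. (\<forall>i. i \<notin> insert n I \<longrightarrow> x i = 0) \<and> qf M (insert n I) (\<lambda>i. of_int (x i)) \<le> c}
     \<subseteq> (\<lambda>(x', k). x'(n := k)) ` (SIGMA x':F. {- K x' .. K x'})"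
  proof
    fix x :: "'a\<Rightarrow>int"
    assume "x \<in> {x::'a\<Rightarrow>int. (\<forall>i. i \<notin> insert n I \<longrightarrow> x i = 0) \<and> qf M (insert n I) (\<lambda>i. of_int (x i)) \<le> c}"
    then have z: "\<forall>i. i \<notin> insert n I \<longrightarrow> x i = 0" and le: "qf M (insert n I) (\<lambda>i. of_int (x i)) \<le> c" by auto
    define x' where "x' = x(n := 0)"
    define t where "t = s (\<lambda>i. of_int (x i)) / a"
    have st: "s (\<lambda>i. of_int (x' i)) = s (\<lambda>i. of_int (x i))"
      unfolding s_def x'_def using insert.hyps by (intro sum.cong) auto
    have q': "qf M' I (\<lambda>i. of_int (x' i)) = qf M' I (\<lambda>i. of_int (x i))"
      using insert.hyps by (intro qf_cong) (auto simp: x'_def)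
    have sq: "0 \<le> a * (of_int (x n) + t)^2" using apos by simp
    have main: "qf M' I (\<lambda>i. of_int (x i)) + a * (of_int (x n) + t)^2 \<le> c"
      using le unfolding dec t_def by simp
    have "\<forall>i. i \<notin> I \<longrightarrow> x' i = 0" using z by (auto simp: x'_def)
    moreover have "qf M' I (\<lambda>i. of_int (x' i)) \<le> c" using q' main sq by linarith
    ultimately have x'F: "x' \<in> F" unfolding F_def by blast
    define y where "y = of_int (x n) + t"
    have qnn: "0 \<le> qf M' I (\<lambda>i. of_int (x i))"
    proof (cases "\<exists>i\<in>I. (of_int (x i)::rat) \<noteq> 0")
      case True then show ?thesis using M'pos by (simp add: less_imp_le)
    next
      case False
      then have "qf M' I (\<lambda>i. of_int (x i)) = qf M' I (\<lambda>i. 0)" by (intro qf_cong) auto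
      then show ?thesis by (simp add: qf_def)
    qed
    have y2: "y^2 \<le> c / a"
    proof -
      have "a * y^2 \<le> c" using main qnn unfolding y_def by linarith
      then show ?thesis using apos by (simp add: pos_le_divide_eq mult.commute)
    qed
    have yb: "\<bar>y\<bar> \<le> max 1 (c / a)"
    proof (cases "\<bar>y\<bar> \<le> 1")
      case False
      have "\<bar>y\<bar> * 1 \<le> \<bar>y\<bar> * \<bar>y\<bar>" using False by (intro mult_left_mono) auto
      also have "\<bar>y\<bar> * \<bar>y\<bar> = y^2" by (simp add: power2_eq_square)
      finally show ?thesis using y2 by simp
    qed simp
    have "of_int \<bar>x n\<bar> \<le> \<bar>t\<bar> + max 1 (c / a)"
      using yb unfolding y_def by linarith
    also have "\<dots> \<le> of_int (K x')" unfolding K_def st t_def[symmetric] by (rule le_of_int_ceiling)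
    finally have "\<bar>x n\<bar> \<le> K x'" by (simp only: of_int_le_iff)
    with x'F show "x \<in> (\<lambda>(x', k). x'(n := k)) ` (SIGMA x':F. {- K x' .. K x'})"
      by (intro image_eqI[of _ _ "(x', x n)"]) (auto simp: x'_def)
  qed
  show ?case by (rule finite_subset[OF sub]) (use finF in auto)
qed



lemma det_on_inverse:
  fixes B :: "nat \<Rightarrow> nat \<Rightarrow> int"
  assumes fin: "finite V" and det: "det_on V B \<noteq> 0"
  shows "\<exists>N::nat\<Rightarrow>nat\<Rightarrow>rat. (\<forall>u\<in>V. \<forall>v\<in>V. (\<Sum>w\<in>V. of_int (B u w) * N w v) = (if u = v then 1 else 0))
     \<and> (\<forall>u\<in>V. \<forall>v\<in>V. (\<Sum>w\<in>V. N u w * of_int (B w v)) = (if u = v then 1 else 0))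
     \<and> (\<forall>u v. u \<notin> V \<or> v \<notin> V \<longrightarrow> N u v = 0)"
proof -
  define n where "n = card V"
  obtain f where bf: "bij_betw f {0..<n} V" using ex_bij_betw_nat_finite[OF fin] n_def by blast
  define f' where "f' = inv_into {0..<n} f"
  have ff': "\<And>u. u \<in> V \<Longrightarrow> f (f' u) = u" unfolding f'_def using bf bij_betw_inv_into_right by fast
  have f'f: "\<And>i. i \<in> {0..<n} \<Longrightarrow> f' (f i) = i" unfolding f'_def using bf bij_betw_inv_into_left by fast
  have f'n: "\<And>u. u \<in> V \<Longrightarrow> f' u < n"
    using bij_betw_inv_into[OF bf] unfolding f'_def by (auto dest: bij_betwE)
  have fV: "\<And>i. i < n \<Longrightarrow> f i \<in> V" using bf by (auto dest: bij_betwE)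
  define Bm where "Bm = mat n n (\<lambda>(i,j). rat_of_int (B (f i) (f j)))"
  have Bc: "Bm \<in> carrier_mat n n" unfolding Bm_def by simp
  define \<Phi> where "\<Phi> = (\<lambda>\<pi> x. if x \<in> V then f (\<pi> (inv_into {0..<n} f x)) else x)"
  have bP: "bij_betw \<Phi> {\<pi>. \<pi> permutes {0..<n}} {\<pi>. \<pi> permutes V}"
    unfolding \<Phi>_def by (rule bij_betw_permutations[OF bf])
  have detBm: "det Bm = of_int (det_on V B)"
  proof -
    have "det_on V B = (\<Sum>q\<in>{\<pi>. \<pi> permutes {0..<n}}. sign (\<Phi> q) * (\<Prod>v\<in>V. B v (\<Phi> q v)))"
      unfolding det_on_def by (rule sum.reindex_bij_betw[OF bP, symmetric])
    also have "\<dots> = (\<Sum>q\<in>{\<pi>. \<pi> permutes {0..<n}}. sign q * (\<Prod>i\<in>{0..<n}. B (f i) (f (q i))))"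
    proof (intro sum.cong refl)
      fix q assume q: "q \<in> {\<pi>. \<pi> permutes {0..<n}}"
      have "permutes_bij_finite q {0..<n} V f f'"
        unfolding permutes_bij_finite_def permutes_bij_finite_axioms_def permutes_bij_def
        using q bf f'f by auto
      then have s: "sign (\<Phi> q) = sign q"
        using permutes_bij_finite.sign_p' unfolding \<Phi>_def f'_def by fastforce
      have "(\<Prod>v\<in>V. B v (\<Phi> q v)) = (\<Prod>i\<in>{0..<n}. B (f i) (\<Phi> q (f i)))"
        by (rule prod.reindex_bij_betw[OF bf, symmetric])
      also have "\<dots> = (\<Prod>i\<in>{0..<n}. B (f i) (f (q i)))"
        using f'f fV unfolding \<Phi>_def f'_def[symmetric] by (intro prod.cong refl) auto
      finally show "sign (\<Phi> q) * (\<Prod>v\<in>V. B v (\<Phi> q v)) = sign q * (\<Prod>i\<in>{0..<n}. B (f i) (f (q i)))"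
        using s by simp
    qed
    finally have "of_int (det_on V B) = (\<Sum>q\<in>{\<pi>. \<pi> permutes {0..<n}}. (of_int (sign q)::rat) * (\<Prod>i\<in>{0..<n}. of_int (B (f i) (f (q i)))))"
      by simp
    also have "\<dots> = det Bm" unfolding det_def'[OF Bc]
    proof (intro sum.cong refl)
      fix q assume q: "q \<in> {\<pi>. \<pi> permutes {0..<n}}"
      have "\<And>i. i \<in> {0..<n} \<Longrightarrow> q i < n" using q permutes_in_image by fastforce
      then show "(of_int (sign q)::rat) * (\<Prod>i\<in>{0..<n}. of_int (B (f i) (f (q i)))) = of_int (sign q) * (\<Prod>i = 0..<n. Bm $$ (i, q i))"
        unfolding Bm_def by (intro arg_cong2[where f="(*)"] refl prod.cong) auto
    qed
    finally show ?thesis by simp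
  qed
  have dnz: "det Bm \<noteq> 0" using detBm det by simp
  define Cm where "Cm = adj_mat Bm"
  have Cc: "Cm \<in> carrier_mat n n" and BC: "Bm * Cm = det Bm \<cdot>\<^sub>m 1\<^sub>m n" and CB: "Cm * Bm = det Bm \<cdot>\<^sub>m 1\<^sub>m n"
    using adj_mat[OF Bc] unfolding Cm_def by auto
  define N where "N = (\<lambda>u v. if u \<in> V \<and> v \<in> V then Cm $$ (f' u, f' v) / det Bm else 0)"
  have r1: "(\<Sum>w\<in>V. of_int (B u w) * N w v) = (if u = v then 1 else 0)" if uv: "u \<in> V" "v \<in> V" for u v
  proof -
    have "(\<Sum>w\<in>V. of_int (B u w) * N w v) = (\<Sum>k\<in>{0..<n}. of_int (B u (f k)) * N (f k) v)"
      by (rule sum.reindex_bij_betw[OF bf, symmetric])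
    also have "\<dots> = (\<Sum>k\<in>{0..<n}. Bm $$ (f' u, k) * Cm $$ (k, f' v)) / det Bm"
      unfolding sum_divide_distrib using uv f'n fV f'f ff'
      by (intro sum.cong refl) (auto simp: N_def Bm_def)
    also have "(\<Sum>k\<in>{0..<n}. Bm $$ (f' u, k) * Cm $$ (k, f' v)) = (Bm * Cm) $$ (f' u, f' v)"
      using Bc Cc uv f'n by (simp add: scalar_prod_def)
    also have "\<dots> = (if f' u = f' v then det Bm else 0)" unfolding BC using uv f'n by simp
    finally have eq: "(\<Sum>w\<in>V. of_int (B u w) * N w v) = (if f' u = f' v then det Bm else 0) / det Bm" .
    have "(f' u = f' v) = (u = v)" using ff' uv by metis
    with eq show ?thesis using dnz by simp
  qed
  have r2: "(\<Sum>w\<in>V. N u w * of_int (B w v)) = (if u = v then 1 else 0)" if uv: "u \<in> V" "v \<in> V" for u v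
  proof -
    have "(\<Sum>w\<in>V. N u w * of_int (B w v)) = (\<Sum>k\<in>{0..<n}. N u (f k) * of_int (B (f k) v))"
      by (rule sum.reindex_bij_betw[OF bf, symmetric])
    also have "\<dots> = (\<Sum>k\<in>{0..<n}. Cm $$ (f' u, k) * Bm $$ (k, f' v)) / det Bm"
      unfolding sum_divide_distrib using uv f'n fV f'f ff'
      by (intro sum.cong refl) (auto simp: N_def Bm_def)
    also have "(\<Sum>k\<in>{0..<n}. Cm $$ (f' u, k) * Bm $$ (k, f' v)) = (Cm * Bm) $$ (f' u, f' v)"
      using Bc Cc uv f'n by (simp add: scalar_prod_def)
    also have "\<dots> = (if f' u = f' v then det Bm else 0)" unfolding CB using uv f'n by simp
    finally have eq: "(\<Sum>w\<in>V. N u w * of_int (B w v)) = (if f' u = f' v then det Bm else 0) / det Bm" .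
    have "(f' u = f' v) = (u = v)" using ff' uv by metis
    with eq show ?thesis using dnz by simp
  qed
  show ?thesis using r1 r2 by (intro exI[of _ N]) (auto simp: N_def)
qed



lemma sum_fun_app: "(sum f S) x = sum (\<lambda>a. f a x) S"
  by (induction S rule: infinite_finite_induct) (auto simp: plus_fun_def zero_fun_def)

lemma sum_ind: "(\<Sum>k\<in>(UNIV::'i::finite set). (if k = i then 1 else 0) * f k) = (f i :: int)"
proof -
  have "(\<Sum>k\<in>(UNIV::'i set). (if k = i then 1 else 0) * f k) = (\<Sum>k\<in>UNIV. if k = i then f k else 0)"
    by (intro sum.cong) auto
  also have "\<dots> = f i" by (simp add: sum.delta)
  finally show ?thesis .
qed

lemma cartan_Aii: "cartan_finite A d \<Longrightarrow> A i i = 2"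
  by (simp add: cartan_finite_def)

lemma srefl_add: "srefl A i (x + y) = srefl A i x + srefl A i y"
  unfolding srefl_def by (auto simp: fun_eq_iff sum.distrib algebra_simps)

lemma srefl_neg: "srefl A i (- x) = - srefl A i x"
  unfolding srefl_def by (auto simp: fun_eq_iff sum_negf)

lemma srefl_invol:
  assumes "A i i = 2"
  shows "srefl A i (srefl A i x) = x"
proof -
  define c where "c = (\<Sum>j\<in>UNIV. A i j * x j)"
  have sx: "srefl A i x = (\<lambda>k. x k - (if k = i then c else 0))" unfolding srefl_def c_def by simp
  have "(\<Sum>j\<in>UNIV. A i j * (x j - (if j = i then c else 0))) = (\<Sum>j\<in>UNIV. A i j * x j) - (\<Sum>j\<in>UNIV. A i j * (if j = i then c else 0))"
    by (simp only: right_diff_distrib sum_subtractf)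
  also have "\<dots> = c - (\<Sum>j\<in>UNIV. (if j = i then 1 else 0) * (A i j * c))"
    unfolding c_def[symmetric] by (intro arg_cong2[where f="(-)"] refl sum.cong) auto
  also have "\<dots> = c - 2 * c" using assms by (simp only: sum_ind)
  finally have e: "(\<Sum>j\<in>UNIV. A i j * (x j - (if j = i then c else 0))) = - c" by simp
  have "srefl A i (srefl A i x) = (\<lambda>k. (x k - (if k = i then c else 0)) - (if k = i then - c else 0))"
    unfolding sx by (simp only: srefl_def e)
  also have "\<dots> = x" by (rule ext) simp
  finally show ?thesis .
qed

lemma rform_add1: "rform A d (x + y) z = rform A d x z + rform A d y z"
  unfolding rform_def by (simp add: sum.distrib algebra_simps)
lemma rform_add2: "rform A d z (x + y) = rform A d z x + rform A d z y"
  unfolding rform_def by (simp add: sum.distrib algebra_simps)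
lemma rform_smult1: "rform A d (\<lambda>k. c * x k) z = c * rform A d x z"
  unfolding rform_def by (simp add: sum_distrib_left algebra_simps)
lemma rform_smult2: "rform A d z (\<lambda>k. c * x k) = c * rform A d z x"
  unfolding rform_def by (simp add: sum_distrib_left algebra_simps)
lemma rform_neg1: "rform A d (- x) z = - rform A d x z"
  unfolding rform_def by (simp add: sum_negf)
lemma rform_neg2: "rform A d z (- x) = - rform A d z x"
  unfolding rform_def by (simp add: sum_negf)
lemma rform_diff1: "rform A d (x - y) z = rform A d x z - rform A d y z"
  using rform_add1[of A d x "-y" z] rform_neg1[of A d y z] by simp
lemma rform_diff2: "rform A d z (x - y) = rform A d z x - rform A d z y"
  using rform_add2[of A d z x "-y"] rform_neg2[of A d z y] by simp

lemma rform_sym: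
  assumes "cartan_finite A d"
  shows "rform A d x y = rform A d y x"
proof -
  have s: "\<And>i j. d i * A i j = d j * A j i" using assms unfolding cartan_finite_def by blast
  have "rform A d x y = (\<Sum>i\<in>UNIV. \<Sum>j\<in>UNIV. y j * d j * A j i * x i)"
    unfolding rform_def by (intro sum.cong refl) (metis (no_types) s mult.commute mult.left_commute)
  also have "\<dots> = rform A d y x" unfolding rform_def by (rule sum.swap)
  finally show ?thesis .
qed

lemma rform_sroot1: "rform A d (sroot i) y = d i * (\<Sum>j\<in>UNIV. A i j * y j)"
proof -
  have "rform A d (sroot i) y = (\<Sum>k\<in>UNIV. (if k = i then 1 else 0) * (\<Sum>j\<in>UNIV. d k * A k j * y j))"
    unfolding rform_def sroot_def by (simp add: sum_distrib_left mult.assoc)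
  also have "\<dots> = (\<Sum>j\<in>UNIV. d i * A i j * y j)" by (rule sum_ind)
  finally show ?thesis by (simp add: sum_distrib_left mult.assoc)
qed

lemma srefl_sroot: "srefl A i x = x + (\<lambda>k. (- (\<Sum>j\<in>UNIV. A i j * x j)) * sroot i k)"
  unfolding srefl_def sroot_def by (auto simp: fun_eq_iff)

lemma srefl_rform:
  assumes c: "cartan_finite A d"
  shows "rform A d (srefl A i x) (srefl A i x) = rform A d x x"
proof -
  define t where "t = - (\<Sum>j\<in>UNIV. A i j * x j)"
  have aii: "A i i = 2" using c by (rule cartan_Aii)
  have ee: "rform A d (sroot i) (sroot i) = 2 * d i"
  proof -
    have "(\<Sum>j\<in>UNIV. A i j * sroot i j) = (\<Sum>j\<in>UNIV. (if j = i then 1 else 0) * A i j)"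
      unfolding sroot_def by (intro sum.cong) auto
    also have "\<dots> = 2" using aii by (simp only: sum_ind)
    finally show ?thesis unfolding rform_sroot1 by simp
  qed
  have ex: "rform A d (sroot i) x = - d i * t" unfolding rform_sroot1 t_def by simp
  have xe: "rform A d x (sroot i) = - d i * t" using ex rform_sym[OF c] by metis
  show ?thesis unfolding srefl_sroot t_def[symmetric]
    by (simp add: rform_add1 rform_add2 rform_smult1 rform_smult2 ex xe ee algebra_simps power2_eq_square)
qed

lemma wword_props:
  assumes c: "cartan_finite A d"
  shows "bij (wword A is) \<and> (\<forall>x y. wword A is (x + y) = wword A is x + wword A is y)
     \<and> (\<forall>x. wword A is (- x) = - wword A is x)
     \<and> (\<forall>x. rform A d (wword A is x) (wword A is x) = rform A d x x)"
proof (induction "is")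
  case Nil
  then show ?case by (simp add: wword_def bij_betw_def inj_on_def)
next
  case (Cons i "is")
  have aii: "A i i = 2" using c by (rule cartan_Aii)
  have w: "wword A (i # is) = srefl A i \<circ> wword A is" by (simp add: wword_def)
  have b: "bij (srefl A i)" by (rule involuntory_imp_bij) (rule srefl_invol[of A i, OF aii])
  have IH1: "bij (wword A is)" and IH2: "\<And>x y. wword A is (x + y) = wword A is x + wword A is y"
    and IH3: "\<And>x. wword A is (- x) = - wword A is x"
    and IH4: "\<And>x. rform A d (wword A is x) (wword A is x) = rform A d x x" using Cons.IH by blast+
  have "bij (srefl A i \<circ> wword A is)" by (rule bij_comp[OF IH1 b])
  moreover have "\<forall>x y. (srefl A i \<circ> wword A is) (x + y) = (srefl A i \<circ> wword A is) x + (srefl A i \<circ> wword A is) y"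
    by (simp only: o_apply IH2 srefl_add simp_thms)
  moreover have "\<forall>x. (srefl A i \<circ> wword A is) (- x) = - (srefl A i \<circ> wword A is) x"
    by (simp only: o_apply IH3 srefl_neg simp_thms)
  moreover have "\<forall>x. rform A d ((srefl A i \<circ> wword A is) x) ((srefl A i \<circ> wword A is) x) = rform A d x x"
    by (simp only: o_apply IH4 srefl_rform[OF c] simp_thms)
  ultimately show ?case unfolding w by blast
qed

lemma weyl_props:
  assumes c: "cartan_finite A d" and w: "w \<in> weyl A"
  shows "bij w" "\<And>x y. w (x + y) = w x + w y" "\<And>x. w (- x) = - w x"
    "\<And>x. rform A d (w x) (w x) = rform A d x x"
  using w wword_props[OF c] unfolding weyl_def by auto

lemma weyl_zero: "cartan_finite A d \<Longrightarrow> w \<in> weyl A \<Longrightarrow> w 0 = 0"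
  using weyl_props(2)[of A d w 0 0] by simp

lemma weyl_inv_app:
  assumes c: "cartan_finite A d" and w: "w \<in> weyl A"
  shows "inv_into UNIV w (w x) = x" "w (inv_into UNIV w y) = y"
  using weyl_props(1)[OF c w] by (auto simp: bij_def surj_f_inv_f)

lemma rat_pos_form:
  assumes c: "cartan_finite A d"
  shows "\<And>x::'i::finite\<Rightarrow>rat. (\<exists>i\<in>UNIV. x i \<noteq> 0) \<Longrightarrow>
     0 < qf (\<lambda>i j. of_int (d i * A i j)) UNIV x"
proof -
  fix x :: "'i \<Rightarrow> rat"
  assume nz: "\<exists>i\<in>UNIV. x i \<noteq> 0"
  define den where "den = (\<lambda>i. snd (quotient_of (x i)))"
  define num where "num = (\<lambda>i. fst (quotient_of (x i)))"
  have denpos: "\<And>i. 0 < den i" unfolding den_def by (simp add: quotient_of_denom_pos')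
  have xi: "\<And>i. x i = of_int (num i) / of_int (den i)"
    unfolding num_def den_def by (metis prod.collapse quotient_of_div)
  define D where "D = (\<Prod>i\<in>UNIV. den i)"
  have Dpos: "0 < D" unfolding D_def using denpos by (simp add: prod_pos)
  define y where "y = (\<lambda>i. num i * (\<Prod>j\<in>UNIV - {i}. den j))"
  have yx: "\<And>i. of_int (y i) = x i * of_int D"
  proof -
    fix i
    have "D = den i * (\<Prod>j\<in>UNIV - {i}. den j)" unfolding D_def
      by (simp add: prod.remove[of UNIV i])
    then show "of_int (y i) = x i * of_int D" unfolding y_def xi using denpos[of i]
      by (simp add: field_simps)
  qed
  have ynz: "y \<noteq> 0"
  proof
    assume "y = 0"
    then have "\<And>i. x i * of_int D = 0" using yx by (metis of_int_0 zero_fun_def)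
    then show False using nz Dpos by auto
  qed
  have "0 < rform A d y y" using c ynz unfolding cartan_finite_def rform_def by blast
  also have "of_int (rform A d y y) = qf (\<lambda>i j. of_int (d i * A i j)) UNIV (\<lambda>i. of_int (y i))"
    unfolding rform_def qf_def by (simp add: mult.assoc)
  also have "\<dots> = (of_int D)^2 * qf (\<lambda>i j. of_int (d i * A i j)) UNIV x"
    unfolding qf_def yx by (simp add: sum_distrib_left algebra_simps power2_eq_square)
  finally have "0 < (of_int D :: rat)^2 * qf (\<lambda>i j. of_int (d i * A i j)) UNIV x" by simp
  then show "0 < qf (\<lambda>i j. of_int (d i * A i j)) UNIV x" using Dpos
    by (simp add: zero_less_mult_iff)
qed

lemma orbit_finite:
  assumes c: "cartan_finite A d"
  shows "finite {w (\<beta>::'i::finite \<Rightarrow> int) | w. w \<in> weyl A}"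
proof -
  define M where "M = (\<lambda>i j. rat_of_int (d i * A i j))"
  have Ms: "\<And>i j. M i j = M j i" using c unfolding M_def cartan_finite_def by metis
  have fin: "finite {x::'i\<Rightarrow>int. (\<forall>i. i \<notin> UNIV \<longrightarrow> x i = 0) \<and> qf M UNIV (\<lambda>i. of_int (x i)) \<le> of_int (rform A d \<beta> \<beta>)}"
    by (rule qf_finite) (use Ms rat_pos_form[OF c] in \<open>auto simp: M_def\<close>)
  have q: "\<And>x. qf M UNIV (\<lambda>i. of_int (x i)) = of_int (rform A d x x)"
    unfolding rform_def qf_def M_def by (simp add: mult.assoc)
  show ?thesis
    by (rule finite_subset[OF _ fin]) (auto simp: q weyl_props(4)[OF c])
qed



lemma Qpos_0: "0 \<in> Qpos A"
  unfolding Qpos_def by (intro CollectI exI[of _ "\<lambda>_. 0"]) (simp add: fun_eq_iff)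

lemma Qpos_add: assumes "x \<in> Qpos A" "y \<in> Qpos A" shows "x + y \<in> Qpos A"
proof -
  obtain n1 where n1: "x = (\<lambda>k. \<Sum>\<alpha>\<in>posroots A. int (n1 \<alpha>) * \<alpha> k)" using assms(1) unfolding Qpos_def by blast
  obtain n2 where n2: "y = (\<lambda>k. \<Sum>\<alpha>\<in>posroots A. int (n2 \<alpha>) * \<alpha> k)" using assms(2) unfolding Qpos_def by blast
  have eq: "x + y = (\<lambda>k. \<Sum>\<alpha>\<in>posroots A. int (n1 \<alpha> + n2 \<alpha>) * \<alpha> k)"
    unfolding n1 n2 by (simp add: fun_eq_iff sum.distrib distrib_right)
  show ?thesis unfolding Qpos_def by (intro CollectI exI[of _ "\<lambda>\<alpha>. n1 \<alpha> + n2 \<alpha>"]) (rule eq)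
qed

lemma Qpos_sum: "finite V \<Longrightarrow> (\<forall>v\<in>V. f v \<in> Qpos A) \<Longrightarrow> sum f V \<in> Qpos A"
  by (induction V rule: finite_induct) (auto intro: Qpos_0 Qpos_add)

lemma Qpos_nonneg: assumes "\<gamma> \<in> Qpos A" shows "0 \<le> \<gamma> k"
proof -
  obtain n where n: "\<gamma> = (\<lambda>k. \<Sum>\<alpha>\<in>posroots A. int (n \<alpha>) * \<alpha> k)" using assms unfolding Qpos_def by blast
  show ?thesis unfolding n by (auto intro!: sum_nonneg simp: posroots_def)
qed

lemma two_rho_Qpos: "two_rho A \<in> Qpos A"
proof -
  have eq: "two_rho A = (\<lambda>k. \<Sum>\<alpha>\<in>posroots A. int 1 * \<alpha> k)"
    by (simp add: two_rho_def fun_eq_iff sum_fun_app)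
  show ?thesis unfolding Qpos_def by (intro CollectI exI[of _ "\<lambda>_. 1"]) (rule eq)
qed

lemma kostant_Qpos: fixes A :: "'i::finite \<Rightarrow> 'i \<Rightarrow> int"
  assumes "kostant A \<alpha> \<noteq> 0" shows "\<alpha> \<in> Qpos A"
proof -
  have "{n::('i \<Rightarrow> int) \<Rightarrow> nat. (\<forall>\<gamma>. \<gamma> \<notin> posroots A \<longrightarrow> n \<gamma> = 0) \<and>
                        (\<lambda>k. \<Sum>\<gamma>\<in>posroots A. int (n \<gamma>) * \<gamma> k) = \<alpha>} \<noteq> {}"
    using assms unfolding kostant_def by (metis card.empty)
  then obtain n :: "('i \<Rightarrow> int) \<Rightarrow> nat" where "(\<lambda>k. \<Sum>\<gamma>\<in>posroots A. int (n \<gamma>) * \<gamma> k) = \<alpha>" by blast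
  then show ?thesis unfolding Qpos_def by (intro CollectI exI[of _ n]) (rule sym)
qed

lemma Kser_supp:
  assumes c: "cartan_finite A d" and x: "x \<in> weyl A" and nz: "Kser A x \<gamma> \<noteq> 0"
  shows "\<exists>\<alpha>\<in>Qpos A. \<gamma> = x (- \<alpha>)"
proof -
  have "(\<Sum>\<alpha>\<in>{\<alpha>. - x (\<lambda>k. two_rho A k + 2 * \<alpha> k) = \<gamma>}. int (kostant A \<alpha>)) \<noteq> 0"
    using nz unfolding Kser_def by auto
  then obtain \<alpha> where a1: "- x (\<lambda>k. two_rho A k + 2 * \<alpha> k) = \<gamma>" and a2: "int (kostant A \<alpha>) \<noteq> 0"
    by (rule sum.not_neutral_contains_not_neutral) auto
  have aQ: "\<alpha> \<in> Qpos A" using a2 kostant_Qpos by auto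
  have eq: "(\<lambda>k. two_rho A k + 2 * \<alpha> k) = two_rho A + \<alpha> + \<alpha>" by (simp add: fun_eq_iff)
  have "two_rho A + \<alpha> + \<alpha> \<in> Qpos A" by (intro Qpos_add two_rho_Qpos aQ)
  moreover have "\<gamma> = x (- (two_rho A + \<alpha> + \<alpha>))" using a1 unfolding eq weyl_props(3)[OF c x] by simp
  ultimately show ?thesis by blast
qed

lemma ser_mult_supp:
  assumes "ser_mult f g \<gamma> \<noteq> 0" shows "\<exists>b c. b + c = \<gamma> \<and> f b \<noteq> 0 \<and> g c \<noteq> 0"
proof -
  from assms obtain p where "p \<in> {(b, c). b + c = \<gamma> \<and> f b \<noteq> 0 \<and> g c \<noteq> 0}"
    unfolding ser_mult_def by (rule sum.not_neutral_contains_not_neutral)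
  then show ?thesis by auto
qed

lemma ser_pow_K:
  assumes c: "cartan_finite A d" and x: "x \<in> weyl A"
  shows "ser_pow (Kser A x) m \<gamma> \<noteq> 0 \<Longrightarrow> \<exists>\<alpha>\<in>Qpos A. \<gamma> = x (- \<alpha>)"
proof (induction m arbitrary: \<gamma>)
  case 0
  then have "\<gamma> = 0" by (simp add: ser_one_def split: if_splits)
  then show ?case by (intro bexI[of _ 0] Qpos_0) (simp only: minus_zero weyl_zero[OF c x])
next
  case (Suc m)
  obtain b cc where bc: "b + cc = \<gamma>" "Kser A x b \<noteq> 0" "ser_pow (Kser A x) m cc \<noteq> 0"
    using ser_mult_supp[of "Kser A x" "ser_pow (Kser A x) m" \<gamma>] Suc.prems by auto
  obtain \<alpha>1 where a1: "\<alpha>1 \<in> Qpos A" "b = x (- \<alpha>1)" using Kser_supp[OF c x bc(2)] by blast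
  obtain \<alpha>2 where a2: "\<alpha>2 \<in> Qpos A" "cc = x (- \<alpha>2)" using Suc.IH[OF bc(3)] by blast
  have "\<gamma> = x (- (\<alpha>1 + \<alpha>2))"
    using bc(1) a1(2) a2(2) weyl_props(2)[OF c x, of "- \<alpha>1" "- \<alpha>2"] by (simp add: add.commute)
  then show ?case using Qpos_add[OF a1(1) a2(1)] by blast
qed

definition Orb :: "('i::finite \<Rightarrow> 'i \<Rightarrow> int) \<Rightarrow> ('i \<Rightarrow> int) set" where
  "Orb A = {w (two_rho A) | w. w \<in> weyl A}"

lemma Dser_supp: "Dser A \<gamma> \<noteq> 0 \<Longrightarrow> \<gamma> \<in> Orb A"
proof -
  assume "Dser A \<gamma> \<noteq> 0"
  then obtain w where "w \<in> {w \<in> weyl A. w (two_rho A) = \<gamma>}"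
    unfolding Dser_def by (rule sum.not_neutral_contains_not_neutral)
  then show ?thesis unfolding Orb_def by blast
qed

definition Fset :: "('i::finite \<Rightarrow> 'i \<Rightarrow> int) \<Rightarrow> nat \<Rightarrow> ('i \<Rightarrow> int) set" where
  "Fset A n = (if n = 0 then (\<lambda>(b, c). b + c) ` (Orb A \<times> Orb A) else if n = 1 then Orb A else {0})"

lemma Fset_finite: "cartan_finite A d \<Longrightarrow> finite (Fset A n)"
  unfolding Fset_def Orb_def using orbit_finite[of A d "two_rho A"] by auto

lemma Kn_supp:
  assumes c: "cartan_finite A d" and x: "x \<in> weyl A" and nz: "Kn A x n \<gamma> \<noteq> 0"
  shows "(n \<le> 2 \<and> \<gamma> \<in> Fset A n) \<or> (\<not> n \<le> 2 \<and> (\<exists>\<alpha>\<in>Qpos A. \<gamma> = x (- \<alpha>)))"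
proof -
  consider "n = 0" | "n = 1" | "n = 2" | "\<not> n \<le> 2" by linarith
  then show ?thesis
  proof cases
    case 1
    then obtain b cc where "b + cc = \<gamma>" "Dser A b \<noteq> 0" "Dser A cc \<noteq> 0"
      using nz ser_mult_supp[of "Dser A" "Dser A" \<gamma>] by (auto simp: Kn_def)
    then show ?thesis using 1 Dser_supp unfolding Fset_def by force
  next
    case 2 then show ?thesis using nz Dser_supp by (auto simp: Kn_def Fset_def)
  next
    case 3 then show ?thesis using nz by (auto simp: Kn_def Fset_def ser_one_def split: if_splits)
  next
    case 4
    then have "ser_pow (Kser A x) (n - 2) \<gamma> \<noteq> 0" using nz by (auto simp: Kn_def)
    then show ?thesis using 4 ser_pow_K[OF c x] by blast
  qed
qed



lemma sum_delta_r: "finite V \<Longrightarrow> v \<in> V \<Longrightarrow> (\<Sum>z\<in>V. f z * (if z = v then 1 else 0)) = (f v :: rat)"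
proof -
  assume "finite V" "v \<in> V"
  have "(\<Sum>z\<in>V. f z * (if z = v then 1 else 0)) = (\<Sum>z\<in>V. if z = v then f z else 0)"
    by (intro sum.cong) auto
  also have "\<dots> = f v" using \<open>finite V\<close> \<open>v \<in> V\<close> by (simp add: sum.delta)
  finally show ?thesis .
qed

lemma sum_delta_l: "finite V \<Longrightarrow> u \<in> V \<Longrightarrow> (\<Sum>z\<in>V. (if u = z then 1 else 0) * f z) = (f u :: rat)"
proof -
  assume "finite V" "u \<in> V"
  have "(\<Sum>z\<in>V. (if u = z then 1 else 0) * f z) = (\<Sum>z\<in>V. if u = z then f z else 0)"
    by (intro sum.cong) auto
  also have "\<dots> = f u" using \<open>finite V\<close> \<open>u \<in> V\<close> by (simp add: sum.delta)
  finally show ?thesis .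
qed

lemma triple_swap:
  "(\<Sum>u\<in>V. \<Sum>v\<in>V. f u v * (\<Sum>w\<in>W. g v w * h u w)) = (\<Sum>u\<in>V. \<Sum>w\<in>W. (\<Sum>v\<in>V. f u v * g v w) * (h u w :: rat))"
proof -
  have "(\<Sum>u\<in>V. \<Sum>v\<in>V. f u v * (\<Sum>w\<in>W. g v w * h u w)) = (\<Sum>u\<in>V. \<Sum>v\<in>V. \<Sum>w\<in>W. f u v * g v w * h u w)"
    by (simp add: sum_distrib_left mult.assoc)
  also have "\<dots> = (\<Sum>u\<in>V. \<Sum>w\<in>W. \<Sum>v\<in>V. f u v * g v w * h u w)"
    by (intro sum.cong refl) (rule sum.swap)
  also have "\<dots> = (\<Sum>u\<in>V. \<Sum>w\<in>W. (\<Sum>v\<in>V. f u v * g v w) * h u w)"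
    by (simp add: sum_distrib_right)
  finally show ?thesis .
qed

lemma wf_finite: "wf_pg G \<Longrightarrow> finite (pV G)" by (simp add: wf_pg_def)

lemma framing_sym: "wf_pg G \<Longrightarrow> framing G u w = framing G w u"
  unfolding framing_def wf_pg_def by auto

lemma Binv_props:
  assumes wf: "wf_pg G" and det: "det_on (pV G) (framing G) \<noteq> 0"
  shows "\<forall>u\<in>pV G. \<forall>v\<in>pV G. (\<Sum>w\<in>pV G. of_int (framing G u w) * Binv G w v) = (if u = v then 1 else 0)"
    and "\<forall>u\<in>pV G. \<forall>v\<in>pV G. (\<Sum>w\<in>pV G. Binv G u w * of_int (framing G w v)) = (if u = v then 1 else 0)"
proof -
  have fin: "finite (pV G)" using wf by (rule wf_finite)
  obtain N :: "nat \<Rightarrow> nat \<Rightarrow> rat" where N1: "\<forall>u\<in>pV G. \<forall>v\<in>pV G. (\<Sum>w\<in>pV G. of_int (framing G u w) * N w v) = (if u = v then 1 else 0)"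
    and N2: "\<forall>u\<in>pV G. \<forall>v\<in>pV G. (\<Sum>w\<in>pV G. N u w * of_int (framing G w v)) = (if u = v then 1 else 0)"
    and N3: "\<forall>u v. u \<notin> pV G \<or> v \<notin> pV G \<longrightarrow> N u v = 0"
    using det_on_inverse[OF fin det] by blast
  have "Binv G = N" unfolding Binv_def
  proof (rule the_equality)
    show "(\<forall>u\<in>pV G. \<forall>v\<in>pV G. (\<Sum>w\<in>pV G. of_int (framing G u w) * N w v) = (if u = v then 1 else 0)) \<and>
      (\<forall>u v. u \<notin> pV G \<or> v \<notin> pV G \<longrightarrow> N u v = 0)" using N1 N3 by blast
  next
    fix M :: "nat \<Rightarrow> nat \<Rightarrow> rat" assume PM: "(\<forall>u\<in>pV G. \<forall>v\<in>pV G. (\<Sum>w\<in>pV G. of_int (framing G u w) * M w v) = (if u = v then 1 else 0)) \<and>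
      (\<forall>u v. u \<notin> pV G \<or> v \<notin> pV G \<longrightarrow> M u v = 0)"
    show "M = N"
    proof (intro ext)
      fix u v
      show "M u v = N u v"
      proof (cases "u \<in> pV G \<and> v \<in> pV G")
        case True
        have "N u v = (\<Sum>z\<in>pV G. N u z * (if z = v then 1 else 0))" using sum_delta_r[OF fin] True by simp
        also have "\<dots> = (\<Sum>z\<in>pV G. N u z * (\<Sum>w\<in>pV G. of_int (framing G z w) * M w v))"
          using PM True by (intro sum.cong refl) auto
        also have "\<dots> = (\<Sum>w\<in>pV G. (\<Sum>z\<in>pV G. N u z * of_int (framing G z w)) * M w v)"
          by (simp add: sum_distrib_left sum_distrib_right mult.assoc) (rule sum.swap)
        also have "\<dots> = (\<Sum>w\<in>pV G. (if u = w then 1 else 0) * M w v)"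
          using N2 True by (intro sum.cong refl) auto
        also have "\<dots> = M u v" using sum_delta_l[OF fin] True by simp
        finally show ?thesis by simp
      next
        case False
        then show ?thesis using PM N3 by auto
      qed
    qed
  qed
  then show "\<forall>u\<in>pV G. \<forall>v\<in>pV G. (\<Sum>w\<in>pV G. of_int (framing G u w) * Binv G w v) = (if u = v then 1 else 0)"
    and "\<forall>u\<in>pV G. \<forall>v\<in>pV G. (\<Sum>w\<in>pV G. Binv G u w * of_int (framing G w v)) = (if u = v then 1 else 0)"
    using N1 N2 by simp_all
qed

lemma rform_lin2: "finite W \<Longrightarrow> rform A d p (\<lambda>k. \<Sum>w\<in>W. c w * z w k) = (\<Sum>w\<in>W. c w * rform A d p (z w))"
proof (induction W rule: finite_induct)
  case empty then show ?case by (simp add: rform_def)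
next
  case (insert w W)
  have "(\<lambda>k. \<Sum>w\<in>insert w W. c w * z w k) = (\<lambda>k. c w * z w k) + (\<lambda>k. \<Sum>w\<in>W. c w * z w k)"
    using insert.hyps by (simp add: fun_eq_iff)
  then show ?case using insert by (simp add: rform_add2 rform_smult2)
qed

lemma rform_lin1: "finite W \<Longrightarrow> rform A d (\<lambda>k. \<Sum>w\<in>W. c w * z w k) p = (\<Sum>w\<in>W. c w * rform A d (z w) p)"
proof (induction W rule: finite_induct)
  case empty then show ?case by (simp add: rform_def)
next
  case (insert w W)
  have "(\<lambda>k. \<Sum>w\<in>insert w W. c w * z w k) = (\<lambda>k. c w * z w k) + (\<lambda>k. \<Sum>w\<in>W. c w * z w k)"
    using insert.hyps by (simp add: fun_eq_iff)
  then show ?case using insert by (simp add: rform_add1 rform_smult1)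
qed

lemma lpair_coset:
  assumes c: "cartan_finite A d" and wf: "wf_pg G" and det: "det_on (pV G) (framing G) \<noteq> 0"
    and l: "l \<in> lcoset G a"
  shows "\<exists>z::int. lpair A d G l l = lpair A d G a a + 4 * of_int z"
proof -
  define V where "V = pV G"
  have fin: "finite V" unfolding V_def using wf by (rule wf_finite)
  define M where "M = Binv G"
  define B where "B = framing G"
  have BM: "\<And>u v. u \<in> V \<Longrightarrow> v \<in> V \<Longrightarrow> (\<Sum>w\<in>V. of_int (B u w) * M w v) = (if u = v then 1 else 0)"
    using Binv_props(1)[OF wf det] unfolding V_def M_def B_def by blast
  have MB: "\<And>u v. u \<in> V \<Longrightarrow> v \<in> V \<Longrightarrow> (\<Sum>w\<in>V. M u w * of_int (B w v)) = (if u = v then 1 else 0)"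
    using Binv_props(2)[OF wf det] unfolding V_def M_def B_def by blast
  have Bs: "\<And>u v. B u v = B v u" unfolding B_def using wf by (rule framing_sym)
  obtain x :: "nat \<Rightarrow> 'a \<Rightarrow> int" where lx: "\<forall>v\<in>V. l v = (\<lambda>k. a v k + 2 * (\<Sum>v'\<in>V. B v v' * x v' k))"
    using l unfolding lcoset_def V_def B_def by blast
  define y where "y = (\<lambda>v k. \<Sum>v'\<in>V. B v v' * x v' k)"
  have ly: "\<And>v. v \<in> V \<Longrightarrow> l v = a v + (\<lambda>k. 2 * y v k)" using lx unfolding y_def by (simp add: fun_eq_iff)
  define R where "R = rform A d"
  have Ry2: "\<And>p v. R p (y v) = (\<Sum>w\<in>V. B v w * R p (x w))" unfolding R_def y_def by (rule rform_lin2[OF fin])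
  have Ry1: "\<And>p v. R (y v) p = (\<Sum>w\<in>V. B v w * R (x w) p)" unfolding R_def y_def by (rule rform_lin1[OF fin])
  have T1: "(\<Sum>u\<in>V. \<Sum>v\<in>V. M u v * of_int (R (p u) (y v))) = of_int (\<Sum>u\<in>V. R (p u) (x u))" for p
  proof -
    have "(\<Sum>u\<in>V. \<Sum>v\<in>V. M u v * of_int (R (p u) (y v))) = (\<Sum>u\<in>V. \<Sum>v\<in>V. M u v * (\<Sum>w\<in>V. of_int (B v w) * of_int (R (p u) (x w))))"
      unfolding Ry2 by simp
    also have "\<dots> = (\<Sum>u\<in>V. \<Sum>w\<in>V. (\<Sum>v\<in>V. M u v * of_int (B v w)) * of_int (R (p u) (x w)))"
      by (rule triple_swap)
    also have "\<dots> = (\<Sum>u\<in>V. \<Sum>w\<in>V. (if u = w then 1 else 0) * of_int (R (p u) (x w)))"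
      using MB by (intro sum.cong refl) auto
    also have "\<dots> = (\<Sum>u\<in>V. of_int (R (p u) (x u)))"
      using sum_delta_l[OF fin] by (intro sum.cong refl) auto
    finally show ?thesis by simp
  qed
  have T2: "(\<Sum>u\<in>V. \<Sum>v\<in>V. M u v * of_int (R (y u) (p v))) = of_int (\<Sum>w\<in>V. R (x w) (p w))" for p
  proof -
    have "(\<Sum>u\<in>V. \<Sum>v\<in>V. M u v * of_int (R (y u) (p v))) = (\<Sum>u\<in>V. \<Sum>v\<in>V. M u v * (\<Sum>w\<in>V. of_int (B u w) * of_int (R (x w) (p v))))"
      unfolding Ry1 by simp
    also have "\<dots> = (\<Sum>v\<in>V. \<Sum>u\<in>V. M u v * (\<Sum>w\<in>V. of_int (B u w) * of_int (R (x w) (p v))))"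
      by (rule sum.swap)
    also have "\<dots> = (\<Sum>v\<in>V. \<Sum>w\<in>V. (\<Sum>u\<in>V. M u v * of_int (B u w)) * of_int (R (x w) (p v)))"
      by (rule triple_swap)
    also have "\<dots> = (\<Sum>v\<in>V. \<Sum>w\<in>V. (if w = v then 1 else 0) * of_int (R (x w) (p v)))"
    proof (intro sum.cong refl)
      fix v w assume v: "v \<in> V" and w: "w \<in> V"
      have "(\<Sum>u\<in>V. M u v * of_int (B u w)) = (\<Sum>u\<in>V. of_int (B w u) * M u v)"
        using Bs by (intro sum.cong refl) (simp add: mult.commute)
      also have "\<dots> = (if w = v then 1 else 0)" using BM v w by blast
      finally show "(\<Sum>u\<in>V. M u v * of_int (B u w)) * of_int (R (x w) (p v)) = (if w = v then 1 else 0) * of_int (R (x w) (p v))"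
        by simp
    qed
    also have "\<dots> = (\<Sum>v\<in>V. of_int (R (x v) (p v)))"
    proof (intro sum.cong refl)
      fix v assume v: "v \<in> V"
      have "(\<Sum>w\<in>V. (if w = v then 1 else 0) * (of_int (R (x w) (p v)) :: rat)) = (\<Sum>w\<in>V. of_int (R (x w) (p v)) * (if w = v then 1 else 0))"
        by (simp add: mult.commute)
      also have "\<dots> = of_int (R (x v) (p v))" using sum_delta_r[OF fin v] by simp
      finally show "(\<Sum>w\<in>V. (if w = v then 1 else 0) * (of_int (R (x w) (p v)) :: rat)) = of_int (R (x v) (p v))" .
    qed
    finally show ?thesis by simp
  qed
  have exp: "\<And>u v. u \<in> V \<Longrightarrow> v \<in> V \<Longrightarrow> R (l u) (l v) = R (a u) (a v) + 2 * R (a u) (y v) + 2 * R (y u) (a v) + 4 * R (y u) (y v)"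
    unfolding R_def by (simp add: ly rform_add1 rform_add2 rform_smult1 rform_smult2)
  have "lpair A d G l l = (\<Sum>u\<in>V. \<Sum>v\<in>V. M u v * of_int (R (l u) (l v)))"
    unfolding lpair_def V_def M_def R_def by simp
  also have "\<dots> = (\<Sum>u\<in>V. \<Sum>v\<in>V. M u v * of_int (R (a u) (a v)))
      + 2 * (\<Sum>u\<in>V. \<Sum>v\<in>V. M u v * of_int (R (a u) (y v)))
      + 2 * (\<Sum>u\<in>V. \<Sum>v\<in>V. M u v * of_int (R (y u) (a v)))
      + 4 * (\<Sum>u\<in>V. \<Sum>v\<in>V. M u v * of_int (R (y u) (y v)))"
    by (simp add: exp sum.distrib sum_distrib_left algebra_simps cong: sum.cong)
  also have "\<dots> = lpair A d G a a + 4 * of_int ((\<Sum>u\<in>V. R (a u) (x u)) + (\<Sum>u\<in>V. R (y u) (x u)))"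
  proof -
    have s: "(\<Sum>w\<in>V. R (x w) (a w)) = (\<Sum>w\<in>V. R (a w) (x w))"
      unfolding R_def using rform_sym[OF c] by simp
    show ?thesis unfolding T1 T2 s
      by (simp add: lpair_def V_def M_def R_def algebra_simps)
  qed
  finally show ?thesis by blast
qed



theorem lemma4p1:
  fixes A :: "'i::finite \<Rightarrow> 'i \<Rightarrow> int" and d :: "'i \<Rightarrow> int"
    and G :: pgraph and a :: "nat \<Rightarrow> ('i \<Rightarrow> int)"
    and \<xi> :: "nat \<Rightarrow> (('i \<Rightarrow> int) \<Rightarrow> ('i \<Rightarrow> int))"
  assumes "cartan_finite A d"
    and "is_tree G"
    and "reduced G"
    and "det_on (pV G) (framing G) \<noteq> 0"
    and "\<exists>y::nat \<Rightarrow> ('i \<Rightarrow> int). \<forall>v\<in>pV G. a v = (\<lambda>k. delta_vec A G v k + 2 * y v k)"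
    and "weyl_assignment A G \<xi>"
  shows "(\<exists>S. finite S \<and>
            (\<forall>l\<in>lcoset G a. cGx A G \<xi> l \<noteq> 0 \<longrightarrow>
               (\<exists>\<beta>\<in>S. \<exists>\<gamma>\<in>Qpos A. xiinv G \<xi> l = \<beta> - \<gamma>)))
       \<and> (\<forall>\<beta>. finite {l \<in> lcoset G a. cGx A G \<xi> l \<noteq> 0 \<and> xiinv G \<xi> l = \<beta>})
       \<and> in_Yring A (Yexp0 A d G - lpair A d G a a / 8) (Ycoeff A d G a \<xi>)"
proof -
  have c: "cartan_finite A d" using assms(1) .
  have wf: "wf_pg G" using assms(2) unfolding is_tree_def by blast
  have det: "det_on (pV G) (framing G) \<noteq> 0" using assms(4) .
  define V where "V = pV G"
  have finV: "finite V" unfolding V_def using wf by (rule wf_finite)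
  have xiW: "\<And>v. v \<in> V \<Longrightarrow> \<xi> v \<in> weyl A" using assms(6) unfolding weyl_assignment_def V_def by blast
  define Vl where "Vl = {v\<in>V. pdeg G v \<le> 2}"
  define Vh where "Vh = {v\<in>V. \<not> pdeg G v \<le> 2}"
  have finVl: "finite Vl" unfolding Vl_def using finV by simp
  have finVh: "finite Vh" unfolding Vh_def using finV by simp
  have VlVh: "V = Vl \<union> Vh" "Vl \<inter> Vh = {}" unfolding Vl_def Vh_def by auto
  define g where "g = (\<lambda>(l::nat \<Rightarrow> 'i \<Rightarrow> int) v. inv_into UNIV (\<xi> v) (l v))"
  define Gset where "Gset = (\<lambda>v. inv_into UNIV (\<xi> v) ` Fset A (pdeg G v))"
  define Sset where "Sset = (\<lambda>h. sum h Vl) ` PiE Vl Gset"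
  have finS: "finite Sset" unfolding Sset_def Gset_def
    by (intro finite_imageI finite_PiE finVl) (use Fset_finite[OF c] in auto)
  have key: "(\<forall>v\<in>Vl. l v \<in> Fset A (pdeg G v)) \<and> (\<forall>v\<in>Vh. - g l v \<in> Qpos A) \<and> sum (g l) Vl \<in> Sset
      \<and> xiinv G \<xi> l = sum (g l) Vl - sum (\<lambda>v. - g l v) Vh"
    if lc: "l \<in> lcoset G a" and cnz: "cGx A G \<xi> l \<noteq> 0" for l
  proof -
    have nz: "\<And>v. v \<in> V \<Longrightarrow> Kn A (\<xi> v) (pdeg G v) (l v) \<noteq> 0"
      using cnz finV unfolding cGx_def V_def by auto
    have low: "\<forall>v\<in>Vl. l v \<in> Fset A (pdeg G v)"
    proof
      fix v assume v: "v \<in> Vl"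
      then have "v \<in> V" "pdeg G v \<le> 2" unfolding Vl_def by auto
      then show "l v \<in> Fset A (pdeg G v)" using Kn_supp[OF c xiW nz] by blast
    qed
    have high: "\<forall>v\<in>Vh. - g l v \<in> Qpos A"
    proof
      fix v assume v: "v \<in> Vh"
      then have vV: "v \<in> V" and "\<not> pdeg G v \<le> 2" unfolding Vh_def by auto
      then obtain \<alpha> where \<alpha>: "\<alpha> \<in> Qpos A" "l v = \<xi> v (- \<alpha>)" using Kn_supp[OF c xiW[OF vV] nz[OF vV]] by blast
      have "g l v = - \<alpha>" unfolding g_def using \<alpha>(2) weyl_inv_app(1)[OF c xiW[OF vV]] by simp
      then show "- g l v \<in> Qpos A" using \<alpha>(1) by simp
    qed
    have inS: "sum (g l) Vl \<in> Sset"
    proof -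
      have "restrict (g l) Vl \<in> PiE Vl Gset"
        using low unfolding Gset_def g_def by (auto simp: restrict_PiE_iff)
      moreover have "sum (g l) Vl = sum (restrict (g l) Vl) Vl" by (intro sum.cong) auto
      ultimately show ?thesis unfolding Sset_def by blast
    qed
    have "xiinv G \<xi> l = sum (g l) V" unfolding xiinv_def g_def V_def by simp
    also have "\<dots> = sum (g l) Vl + sum (g l) Vh" unfolding VlVh(1) by (rule sum.union_disjoint[OF finVl finVh VlVh(2)])
    also have "\<dots> = sum (g l) Vl - sum (\<lambda>v. - g l v) Vh" by (simp add: sum_negf)
    finally show ?thesis using low high inS by blast
  qed
  have P1: "\<exists>Sset. finite Sset \<and>
            (\<forall>l\<in>lcoset G a. cGx A G \<xi> l \<noteq> 0 \<longrightarrow>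
               (\<exists>\<beta>\<in>Sset. \<exists>\<gamma>\<in>Qpos A. xiinv G \<xi> l = \<beta> - \<gamma>))"
  proof (intro exI[of _ Sset] conjI finS ballI impI)
    fix l assume "l \<in> lcoset G a" "cGx A G \<xi> l \<noteq> 0"
    note k = key[OF this]
    have "sum (\<lambda>v. - g l v) Vh \<in> Qpos A" using k finVh by (intro Qpos_sum) auto
    then show "\<exists>\<beta>\<in>Sset. \<exists>\<gamma>\<in>Qpos A. xiinv G \<xi> l = \<beta> - \<gamma>" using k by blast
  qed
  have P2: "finite {l \<in> lcoset G a. cGx A G \<xi> l \<noteq> 0 \<and> xiinv G \<xi> l = \<beta>}" for \<beta>
  proof -
    define Bk where "Bk = (\<lambda>k. \<Sum>s\<in>Sset. \<bar>s k - \<beta> k\<bar>)"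
    define Box where "Box = {\<alpha>::'i \<Rightarrow> int. \<forall>k. 0 \<le> \<alpha> k \<and> \<alpha> k \<le> Bk k}"
    have finBox: "finite Box"
    proof (rule finite_subset)
      show "Box \<subseteq> PiE UNIV (\<lambda>k. {0..Bk k})" unfolding Box_def by (auto simp: PiE_iff)
      show "finite (PiE UNIV (\<lambda>k. {0..Bk k}))" by (intro finite_PiE) auto
    qed
    define H where "H = (\<lambda>v. if v \<in> Vl then Fset A (pdeg G v) else (\<lambda>\<alpha>. \<xi> v (- \<alpha>)) ` Box)"
    have finH: "\<And>v. finite (H v)" unfolding H_def using Fset_finite[OF c] finBox by auto
    have sub: "{l \<in> lcoset G a. cGx A G \<xi> l \<noteq> 0 \<and> xiinv G \<xi> l = \<beta>}
       \<subseteq> (\<lambda>f v. if v \<in> V then f v else 0) ` PiE V H"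
    proof
      fix l assume "l \<in> {l \<in> lcoset G a. cGx A G \<xi> l \<noteq> 0 \<and> xiinv G \<xi> l = \<beta>}"
      then have lc: "l \<in> lcoset G a" and cnz: "cGx A G \<xi> l \<noteq> 0" and xb: "xiinv G \<xi> l = \<beta>" by auto
      note k = key[OF lc cnz]
      have l0: "\<And>v. v \<notin> V \<Longrightarrow> l v = 0" using lc unfolding lcoset_def V_def by blast
      define s where "s = sum (g l) Vl"
      have sS: "s \<in> Sset" using k unfolding s_def by blast
      have gam: "sum (\<lambda>v. - g l v) Vh = s - \<beta>" using k xb unfolding s_def by simp
      have lH: "l v \<in> H v" if vV: "v \<in> V" for v
      proof (cases "v \<in> Vl")
        case True then show ?thesis using k unfolding H_def by simp
      next
        case False
        then have vh: "v \<in> Vh" using vV VlVh by auto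
        define \<alpha> where "\<alpha> = - g l v"
        have aQ: "\<alpha> \<in> Qpos A" using k vh unfolding \<alpha>_def by blast
        have "\<alpha> \<in> Box" unfolding Box_def
        proof (intro CollectI allI conjI)
          fix k
          show "0 \<le> \<alpha> k" by (rule Qpos_nonneg[OF aQ])
          have "\<alpha> k \<le> (\<Sum>w\<in>Vh. (- g l w) k)" unfolding \<alpha>_def
            by (rule member_le_sum[OF vh _ finVh]) (use k Qpos_nonneg in blast)
          also have "\<dots> = (sum (\<lambda>v. - g l v) Vh) k" by (simp add: sum_fun_app)
          also have "\<dots> = s k - \<beta> k" unfolding gam by simp
          also have "\<dots> \<le> \<bar>s k - \<beta> k\<bar>" by simp
          also have "\<dots> \<le> Bk k" unfolding Bk_def
            by (rule member_le_sum[OF sS _ finS, of "\<lambda>s. \<bar>s k - \<beta> k\<bar>"]) simp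
          finally show "\<alpha> k \<le> Bk k" .
        qed
        moreover have "l v = \<xi> v (- \<alpha>)" unfolding \<alpha>_def g_def using weyl_inv_app(2)[OF c xiW[OF vV]] by simp
        ultimately show ?thesis unfolding H_def using False by auto
      qed
      have "restrict l V \<in> PiE V H" using lH by (auto simp: restrict_PiE_iff)
      moreover have "l = (\<lambda>v. if v \<in> V then restrict l V v else 0)" using l0 by (auto simp: fun_eq_iff)
      ultimately show "l \<in> (\<lambda>f v. if v \<in> V then f v else 0) ` PiE V H" by blast
    qed
    show ?thesis by (rule finite_subset[OF sub]) (intro finite_imageI finite_PiE finV finH)
  qed
  have P3: "in_Yring A (Yexp0 A d G - lpair A d G a a / 8) (Ycoeff A d G a \<xi>)"
    unfolding in_Yring_def
  proof (intro conjI allI impI)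
    obtain S' where S': "finite S'" "\<forall>l\<in>lcoset G a. cGx A G \<xi> l \<noteq> 0 \<longrightarrow>
               (\<exists>\<beta>\<in>S'. \<exists>\<gamma>\<in>Qpos A. xiinv G \<xi> l = \<beta> - \<gamma>)" using P1 by blast
    show "\<exists>Sset. finite Sset \<and> (\<forall>\<beta> e. Ycoeff A d G a \<xi> \<beta> e \<noteq> 0 \<longrightarrow> (\<exists>\<beta>0\<in>Sset. \<beta>0 - \<beta> \<in> Qpos A))"
    proof (intro exI[of _ S'] conjI S'(1) allI impI)
      fix \<beta> e assume "Ycoeff A d G a \<xi> \<beta> e \<noteq> 0"
      then obtain l where "l \<in> {l \<in> lcoset G a. cGx A G \<xi> l \<noteq> 0 \<and> xiinv G \<xi> l = \<beta> \<and>
             Yexp0 A d G - lpair A d G l l / 8 = e}"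
        unfolding Ycoeff_def by (rule sum.not_neutral_contains_not_neutral)
      then have "l \<in> lcoset G a" "cGx A G \<xi> l \<noteq> 0" "xiinv G \<xi> l = \<beta>" by auto
      then obtain \<beta>0 \<gamma> where "\<beta>0 \<in> S'" "\<gamma> \<in> Qpos A" "\<beta> = \<beta>0 - \<gamma>" using S'(2) by metis
      then show "\<exists>\<beta>0\<in>S'. \<beta>0 - \<beta> \<in> Qpos A" by (intro bexI[of _ \<beta>0]) auto
    qed
  next
    fix \<beta>
    have "{e. Ycoeff A d G a \<xi> \<beta> e \<noteq> 0} \<subseteq> (\<lambda>l. Yexp0 A d G - lpair A d G l l / 8) `
        {l \<in> lcoset G a. cGx A G \<xi> l \<noteq> 0 \<and> xiinv G \<xi> l = \<beta>}"
    proof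
      fix e assume "e \<in> {e. Ycoeff A d G a \<xi> \<beta> e \<noteq> 0}"
      then have "Ycoeff A d G a \<xi> \<beta> e \<noteq> 0" by simp
      then obtain l where "l \<in> {l \<in> lcoset G a. cGx A G \<xi> l \<noteq> 0 \<and> xiinv G \<xi> l = \<beta> \<and>
             Yexp0 A d G - lpair A d G l l / 8 = e}"
        unfolding Ycoeff_def by (rule sum.not_neutral_contains_not_neutral)
      then show "e \<in> (\<lambda>l. Yexp0 A d G - lpair A d G l l / 8) `
        {l \<in> lcoset G a. cGx A G \<xi> l \<noteq> 0 \<and> xiinv G \<xi> l = \<beta>}" by blast
    qed
    then show "finite {e. Ycoeff A d G a \<xi> \<beta> e \<noteq> 0}" using P2 finite_surj by blast
  next
    fix \<beta> e assume "Ycoeff A d G a \<xi> \<beta> e \<noteq> 0"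
    then obtain l where "l \<in> {l \<in> lcoset G a. cGx A G \<xi> l \<noteq> 0 \<and> xiinv G \<xi> l = \<beta> \<and>
             Yexp0 A d G - lpair A d G l l / 8 = e}"
      unfolding Ycoeff_def by (rule sum.not_neutral_contains_not_neutral)
    then have lc: "l \<in> lcoset G a" and e: "e = Yexp0 A d G - lpair A d G l l / 8" by auto
    obtain z where z: "lpair A d G l l = lpair A d G a a + 4 * of_int z"
      using lpair_coset[OF c wf det lc] by blast
    have "2 * (e - (Yexp0 A d G - lpair A d G a a / 8)) = of_int (- z)" unfolding e z by (simp add: field_simps)
    then show "2 * (e - (Yexp0 A d G - lpair A d G a a / 8)) \<in> \<int>" by (metis Ints_of_int)
  qed
  show ?thesis using P1 P2 P3 by blast
qed


end
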